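(* Let $0<\lambda<1$ and let $A \subseteq \mathbb{N}$. Suppose there exists a sequence $(c_n)_{n \in \mathbb{N}}$ of positive real numbers with $\lim_{n\to\infty} c_n = 0$ such that for every $n \in \mathbb{N}$, $$\sum_{a \in A[x]} \frac{c_n(1-\lambda)\log(a)\exp(c_n a^{1-\lambda})}{a^\lambda} \sim \exp(c_n x^{1-\lambda}) \qquad (x\to\infty).$$ Then $$\pi_A(x + x^\lambda) - \pi_A(x) \sim \frac{x^\lambda}{\log(x)}.$$
   Context: Here $\mathbb{N} = \{1,2,3,\dots\}$. For $A \subseteq \mathbb{N}$ and $x\in\mathbb{R}$, write $A[x] = \{a \in A : a \le x\}$ and $\pi_A(x) = \# A[x]$. $f\sim g$ means $f(x)/g(x)\to 1$ as $x\to\infty$. *)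

theory Defs
  imports "HOL-Analysis.Analysis" "HOL-Library.Landau_Symbols"
begin

text \<open>A[x] = {a in A. a <= x} and pi_A(x) = #A[x], for A a set of positive naturals.\<close>

definition upto_set :: "nat set \<Rightarrow> real \<Rightarrow> nat set" where
  "upto_set A x = {a \<in> A. real a \<le> x}"

definition countA :: "nat set \<Rightarrow> real \<Rightarrow> nat" where
  "countA A x = card (upto_set A x)"

end

theory Submission
  imports Defs "HOL-Real_Asymp.Real_Asymp"
begin

lemma upto_finite: "finite (upto_set A x)"
proof -
  have "upto_set A x \<subseteq> {..nat \<lfloor>x\<rfloor>}"
    unfolding upto_set_def by (auto simp: le_nat_floor)
  thus ?thesis by (rule finite_subset) auto
qed

lemma upto_split:
  assumes "h \<ge> 0"
  shows "upto_set A (x + h) = upto_set A x \<union> {a\<in>A. x < real a \<and> real a \<le> x + h}"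
    and "upto_set A x \<inter> {a\<in>A. x < real a \<and> real a \<le> x + h} = {}"
  using assms unfolding upto_set_def by auto

lemma gl1: fixes lam::real assumes "0<lam" "lam<1"
  shows "((\<lambda>c. (exp (c*(1-lam)) - 1)/(c*(1-lam))) \<longlongrightarrow> 1) (at_right 0)"
  using assms by real_asymp
lemma gl2: fixes lam::real assumes "0<lam" "lam<1"
  shows "((\<lambda>c. (exp (c*(1-lam)) - 1)/(c*(1-lam)) * exp (-(c*(1-lam)))) \<longlongrightarrow> 1) (at_right 0)"
  using assms by real_asymp

lemma l1: fixes lam::real assumes "0<lam" "lam<1" shows "((\<lambda>x. (x + x powr lam) powr lam / x powr lam) \<longlongrightarrow> 1) at_top"
  using assms by real_asymp
lemma l2: fixes lam::real assumes "0<lam" "lam<1" shows "((\<lambda>x. ln x / ln (x + x powr lam)) \<longlongrightarrow> 1) at_top"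
  using assms by real_asymp
lemma l3: fixes lam::real assumes "0<lam" "lam<1" shows "((\<lambda>x. (x + x powr lam) powr (1-lam) - x powr (1-lam)) \<longlongrightarrow> 1-lam) at_top"
  using assms by real_asymp
lemma l4: fixes lam::real assumes "0<lam" "lam<1" shows "filterlim (\<lambda>x. x + x powr lam) at_top at_top"
  using assms by real_asymp

lemma key:
  fixes lam c :: real and A :: "nat set"
  assumes lam: "0 < lam" "lam < 1" and c: "c > 0"
    and eq: "(\<lambda>x::real. \<Sum>a\<in>upto_set A x.
         c * (1 - lam) * ln (real a) * exp (c * real a powr (1 - lam)) / real a powr lam)
      \<sim>[at_top] (\<lambda>x. exp (c * x powr (1 - lam)))"
    and d: "d > 0"
  shows "eventually (\<lambda>x. (real (countA A (x + x powr lam)) - real (countA A x)) * ln x / x powr lam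
            < (exp (c*(1-lam)) - 1)/(c*(1-lam)) + d) at_top"
    and "eventually (\<lambda>x. (real (countA A (x + x powr lam)) - real (countA A x)) * ln x / x powr lam
            > (exp (c*(1-lam)) - 1)/(c*(1-lam)) * exp (-(c*(1-lam))) - d) at_top"
proof -
  define u where "u = c*(1-lam)"
  have u: "u > 0" using lam c by (simp add: u_def)
  define w where "w = (\<lambda>a::nat. c * (1 - lam) * ln (real a) * exp (c * real a powr (1 - lam)) / real a powr lam)"
  define S where "S = (\<lambda>x. \<Sum>a\<in>upto_set A x. w a)"
  define T where "T = (\<lambda>x::real. exp (c * x powr (1 - lam)))"
  define h where "h = (\<lambda>x::real. x powr lam)"
  define B where "B = (\<lambda>x. {a\<in>A. x < real a \<and> real a \<le> x + h x})"
  define N where "N = (\<lambda>x. real (countA A (x + x powr lam)) - real (countA A x))"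
  define Q where "Q = (\<lambda>x. (S (x + h x) - S x) / T x)"
  have ST: "((\<lambda>x. S x / T x) \<longlongrightarrow> 1) at_top"
    using asymp_equivD[OF eq] by (simp add: S_def T_def w_def)
  have ST2: "((\<lambda>x. S (x + h x) / T (x + h x)) \<longlongrightarrow> 1) at_top"
    using filterlim_compose[OF ST l4[OF lam]] by (simp add: h_def)
  have TT: "((\<lambda>x. T (x + h x) / T x) \<longlongrightarrow> exp u) at_top"
  proof -
    have "((\<lambda>x. exp (c * ((x + x powr lam) powr (1-lam) - x powr (1-lam)))) \<longlongrightarrow> exp (c*(1-lam))) at_top"
      by (intro tendsto_intros l3[OF lam])
    thus ?thesis unfolding T_def h_def u_def
      by (simp add: exp_diff[symmetric] algebra_simps)
  qed
  have TT': "((\<lambda>x. T x / T (x + h x)) \<longlongrightarrow> exp (-u)) at_top"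
  proof -
    have "((\<lambda>x. inverse (T (x + h x) / T x)) \<longlongrightarrow> inverse (exp u)) at_top"
      by (intro tendsto_intros TT) simp
    thus ?thesis by (simp add: exp_minus)
  qed
  have Qlim: "(Q \<longlongrightarrow> exp u - 1) at_top"
  proof -
    have "((\<lambda>x. S (x + h x) / T (x + h x) * (T (x + h x) / T x) - S x / T x) \<longlongrightarrow> 1 * exp u - 1) at_top"
      by (intro tendsto_intros ST ST2 TT)
    moreover have "S (x + h x) / T (x + h x) * (T (x + h x) / T x) - S x / T x = Q x" for x
      by (simp add: Q_def T_def diff_divide_distrib)
    ultimately show ?thesis by simp
  qed
  have decomp: "N x = real (card (B x)) \<and> S (x + h x) - S x = sum w (B x)" if "x \<ge> 0" for x
  proof -
    have h0: "h x \<ge> 0" by (simp add: h_def)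
    have fB: "finite (B x)"
      using upto_finite[of A "x + h x"] upto_split(1)[OF h0, of A x] by (auto simp: B_def)
    have sp1: "upto_set A (x + h x) = upto_set A x \<union> B x"
      using upto_split(1)[OF h0, of A x] by (simp add: B_def)
    have sp2: "upto_set A x \<inter> B x = {}"
      using upto_split(2)[OF h0, of A x] by (simp add: B_def)
    note sp = sp1 sp2
    have sp1': "upto_set A (x + x powr lam) = upto_set A x \<union> B x" using sp1 by (simp add: h_def)
    show ?thesis
      unfolding N_def S_def countA_def sp(1) sp1'
      using card_Un_disjoint[OF upto_finite fB sp(2)] sum.union_disjoint[OF upto_finite fB sp(2), of w]
      by simp
  qed
  have bounds: "real (card (B x)) * (u * ln x * T x / (x + h x) powr lam) \<le> sum w (B x)
      \<and> sum w (B x) \<le> real (card (B x)) * (u * ln (x + h x) * T (x + h x) / x powr lam)"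
    if x: "x \<ge> 1" for x
  proof -
    have h0: "h x \<ge> 0" by (simp add: h_def)
    have wb: "u * ln x * T x / (x + h x) powr lam \<le> w a \<and> w a \<le> u * ln (x + h x) * T (x + h x) / x powr lam"
      if a: "a \<in> B x" for a
    proof -
      have ax: "x < real a" "real a \<le> x + h x" using a by (auto simp: B_def)
      have apos: "real a > 0" using ax x by linarith
      have lnx: "0 \<le> ln x" using x by simp
      have ln1: "ln x \<le> ln (real a)" "ln (real a) \<le> ln (x + h x)" using ax x apos by auto
      have p1: "real a powr (1-lam) \<le> (x + h x) powr (1-lam)" "x powr (1-lam) \<le> real a powr (1-lam)"
        using ax x lam by (auto intro!: powr_mono2)
      have e1: "T x \<le> exp (c * real a powr (1 - lam))" "exp (c * real a powr (1 - lam)) \<le> T (x + h x)"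
        using p1 c by (auto simp: T_def)
      have q1: "x powr lam \<le> real a powr lam" "real a powr lam \<le> (x + h x) powr lam"
        using ax x lam by (auto intro!: powr_mono2)
      have xp: "x powr lam > 0" using x by simp
      have xp2: "(x + h x) powr lam > 0" "real a powr lam > 0" using x h0 apos by auto
      have wdef: "w a = u * ln (real a) * exp (c * real a powr (1 - lam)) / real a powr lam"
        by (simp add: w_def u_def)
      have A1: "u * ln x * T x \<le> u * ln (real a) * exp (c * real a powr (1 - lam))"
        using u lnx ln1 e1 by (intro mult_mono) (auto simp: T_def)
      have A2: "u * ln (real a) * exp (c * real a powr (1 - lam)) \<le> u * ln (x + h x) * T (x + h x)"
        using u lnx ln1 e1 by (intro mult_mono) auto
      have "u * ln x * T x / (x + h x) powr lam \<le> u * ln x * T x / real a powr lam"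
        using u lnx q1 xp xp2 by (intro divide_left_mono) (auto simp: T_def)
      also have "\<dots> \<le> w a" unfolding wdef using A1 apos by (intro divide_right_mono) auto
      finally have L: "u * ln x * T x / (x + h x) powr lam \<le> w a" .
      have "w a \<le> u * ln (x + h x) * T (x + h x) / real a powr lam"
        unfolding wdef using A2 apos by (intro divide_right_mono) auto
      also have "\<dots> \<le> u * ln (x + h x) * T (x + h x) / x powr lam"
        using u lnx ln1 q1 xp xp2 by (intro divide_left_mono) (auto simp: T_def)
      finally show ?thesis using L by simp
    qed
    show ?thesis
    proof
      show "real (card (B x)) * (u * ln x * T x / (x + h x) powr lam) \<le> sum w (B x)"
        by (rule sum_bounded_below) (use wb in blast)
      show "sum w (B x) \<le> real (card (B x)) * (u * ln (x + h x) * T (x + h x) / x powr lam)"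
        by (rule sum_bounded_above) (use wb in blast)
    qed
  qed
  define R where "R = (\<lambda>x. N x * ln x / x powr lam)"
  have upper: "R x \<le> Q x / u * ((x + h x) powr lam / x powr lam)" if x: "x \<ge> 1" for x
  proof -
    have D: "N x = real (card (B x))" "S (x + h x) - S x = sum w (B x)" using decomp[of x] x by auto
    have Tp: "T x > 0" by (simp add: T_def)
    have xp0: "x powr lam > 0" using x by simp
    then have "x + h x > 0" using x unfolding h_def by linarith
    then have xp: "x powr lam > 0" "(x + h x) powr lam > 0" using xp0 by auto
    have E: "S (x + h x) - S x = Q x * T x" using Tp by (simp add: Q_def)
    have b: "N x * (u * ln x * T x / (x + h x) powr lam) \<le> Q x * T x"
      using bounds[OF x] D E by simp
    have "R x = (N x * (u * ln x * T x / (x + h x) powr lam)) / (u * T x) * ((x + h x) powr lam / x powr lam)"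
      unfolding R_def using Tp xp u by (simp add: field_simps)
    also have "\<dots> \<le> (Q x * T x) / (u * T x) * ((x + h x) powr lam / x powr lam)"
      using b Tp xp u by (intro mult_right_mono divide_right_mono) auto
    also have "\<dots> = Q x / u * ((x + h x) powr lam / x powr lam)"
      using Tp u by simp
    finally show ?thesis .
  qed
  have lower: "Q x / u * (ln x / ln (x + h x)) * (T x / T (x + h x)) \<le> R x" if x: "x \<ge> 1" for x
  proof -
    have D: "N x = real (card (B x))" "S (x + h x) - S x = sum w (B x)" using decomp[of x] x by auto
    have Tp: "T x > 0" "T (x + h x) > 0" by (simp_all add: T_def)
    have xp: "x powr lam > 0" "h x > 0" using x by (auto simp: h_def)
    have lp: "ln (x + h x) > 0" "ln x \<ge> 0" using x xp by auto
    have E: "S (x + h x) - S x = Q x * T x" using Tp by (simp add: Q_def)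
    have b: "Q x * T x \<le> N x * (u * ln (x + h x) * T (x + h x) / x powr lam)"
      using bounds[OF x] D E by simp
    have "Q x / u * (ln x / ln (x + h x)) * (T x / T (x + h x)) = (Q x * T x) * (ln x / (u * ln (x + h x) * T (x + h x)))"
      using Tp u lp by (simp add: field_simps)
    also have "\<dots> \<le> N x * (u * ln (x + h x) * T (x + h x) / x powr lam) * (ln x / (u * ln (x + h x) * T (x + h x)))"
      using b Tp u lp by (intro mult_right_mono) auto
    also have "\<dots> = R x"
      unfolding R_def using Tp xp u lp by (simp add: field_simps)
    finally show ?thesis .
  qed
  have Ulim: "((\<lambda>x. Q x / u * ((x + h x) powr lam / x powr lam)) \<longlongrightarrow> (exp u - 1) / u * 1) at_top"
    unfolding h_def by (intro tendsto_intros Qlim[unfolded h_def] l1[OF lam]) (use u in simp)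
  have Llim: "((\<lambda>x. Q x / u * (ln x / ln (x + h x)) * (T x / T (x + h x))) \<longlongrightarrow> (exp u - 1) / u * 1 * exp (-u)) at_top"
  proof -
    have l2': "((\<lambda>x. ln x / ln (x + h x)) \<longlongrightarrow> 1) at_top" using l2[OF lam] by (simp add: h_def)
    show ?thesis by (intro tendsto_intros Qlim TT' l2') (use u in simp)
  qed
  have ev1: "eventually (\<lambda>x::real. x \<ge> 1) at_top" by (rule eventually_ge_at_top)
  have "eventually (\<lambda>x. Q x / u * ((x + h x) powr lam / x powr lam) < (exp u - 1) / u + d) at_top"
    using order_tendstoD(2)[OF Ulim, of "(exp u - 1) / u + d"] d by simp
  then show "eventually (\<lambda>x. (real (countA A (x + x powr lam)) - real (countA A x)) * ln x / x powr lam
            < (exp (c*(1-lam)) - 1)/(c*(1-lam)) + d) at_top"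
    using ev1 by eventually_elim (use upper in \<open>force simp: R_def N_def u_def\<close>)
  have "eventually (\<lambda>x. Q x / u * (ln x / ln (x + h x)) * (T x / T (x + h x)) > (exp u - 1) / u * exp (-u) - d) at_top"
    using order_tendstoD(1)[OF Llim, of "(exp u - 1) / u * exp (-u) - d"] d by simp
  then show "eventually (\<lambda>x. (real (countA A (x + x powr lam)) - real (countA A x)) * ln x / x powr lam
            > (exp (c*(1-lam)) - 1)/(c*(1-lam)) * exp (-(c*(1-lam))) - d) at_top"
    using ev1 by eventually_elim (use lower in \<open>force simp: R_def N_def u_def\<close>)
qed

theorem mainTheorem6:
  fixes lam :: real and A :: "nat set" and c :: "nat \<Rightarrow> real"
  assumes "0 < lam" and "lam < 1"
    and "0 \<notin> A"
    and "\<And>n. n \<ge> 1 \<Longrightarrow> c n > 0"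
    and "c \<longlonglongrightarrow> 0"
    and "\<And>n. n \<ge> 1 \<Longrightarrow>
      (\<lambda>x::real. \<Sum>a\<in>upto_set A x.
         c n * (1 - lam) * ln (real a) * exp (c n * real a powr (1 - lam)) / real a powr lam)
      \<sim>[at_top] (\<lambda>x. exp (c n * x powr (1 - lam)))"
  shows "(\<lambda>x::real. real (countA A (x + x powr lam)) - real (countA A x))
      \<sim>[at_top] (\<lambda>x. x powr lam / ln x)"
proof -
  define R where "R = (\<lambda>x. (real (countA A (x + x powr lam)) - real (countA A x)) * ln x / x powr lam)"
  have cl: "filterlim c (at_right 0) sequentially"
    using assms(5) by (rule tendsto_imp_filterlim_at_right)
      (unfold eventually_sequentially, use assms(4) in blast)
  have g1: "((\<lambda>n. (exp (c n*(1-lam)) - 1)/(c n*(1-lam))) \<longlongrightarrow> 1) sequentially"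
    using filterlim_compose[OF gl1[OF assms(1,2)] cl] by simp
  have g2: "((\<lambda>n. (exp (c n*(1-lam)) - 1)/(c n*(1-lam)) * exp (-(c n*(1-lam)))) \<longlongrightarrow> 1) sequentially"
    using filterlim_compose[OF gl2[OF assms(1,2)] cl] by simp
  have "(R \<longlongrightarrow> 1) at_top"
  proof (rule tendstoI)
    fix e :: real assume e: "e > 0"
    have "eventually (\<lambda>n. (exp (c n*(1-lam)) - 1)/(c n*(1-lam)) < 1 + e/2 \<and>
        (exp (c n*(1-lam)) - 1)/(c n*(1-lam)) * exp (-(c n*(1-lam))) > 1 - e/2 \<and> n \<ge> 1) sequentially"
    proof -
      have a: "eventually (\<lambda>n. (exp (c n*(1-lam)) - 1)/(c n*(1-lam)) < 1 + e/2) sequentially"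
        using order_tendstoD(2)[OF g1, of "1 + e/2"] e by simp
      have b: "eventually (\<lambda>n. (exp (c n*(1-lam)) - 1)/(c n*(1-lam)) * exp (-(c n*(1-lam))) > 1 - e/2) sequentially"
        using order_tendstoD(1)[OF g2, of "1 - e/2"] e by simp
      show ?thesis using a b eventually_ge_at_top[of "1::nat"] by eventually_elim auto
    qed
    then obtain n where n: "(exp (c n*(1-lam)) - 1)/(c n*(1-lam)) < 1 + e/2"
        "(exp (c n*(1-lam)) - 1)/(c n*(1-lam)) * exp (-(c n*(1-lam))) > 1 - e/2" "n \<ge> 1"
      using eventually_happens[of _ sequentially] by (metis (no_types, lifting) sequentially_bot)
    have e2: "e/2 > 0" using e by simp
    note k = key[OF assms(1,2) assms(4)[OF n(3)] assms(6)[OF n(3)] e2]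
    show "eventually (\<lambda>x. dist (R x) 1 < e) at_top"
      using k(1) k(2)
      by eventually_elim (use n in \<open>auto simp: R_def dist_real_def abs_less_iff\<close>)
  qed
  moreover have "R = (\<lambda>x. (real (countA A (x + x powr lam)) - real (countA A x)) / (x powr lam / ln x))"
    by (simp add: R_def fun_eq_iff)
  ultimately show ?thesis
    by (intro asymp_equivI') simp
qed

end
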